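(* Let $\rho_{AB}\in\mathcal{S}_\le(\mathcal{H}_{AB})$. Then $$I_{\max}(A:B)_\rho=H_0(A)_\rho-H_{\min}(A|B)_{\rho_{B|A}},$$ where $H_0(A)_\rho=\log\mathrm{rank}(\rho_A)$ and $\rho_{B|A}=(\rho_A\otimes\mathbb{1}_B)^{-1/2}\frac{\rho_{AB}}{\mathrm{rank}(\rho_A)}(\rho_A\otimes\mathbb{1}_B)^{-1/2}$, with generalized inverses.
   Context: Finite-dimensional Hilbert spaces; logarithms base 2. $\mathcal{S}_\le(\mathcal{H})$: positive semidefinite operators of trace $\le1$; $\mathcal{S}_=(\mathcal{H})$: trace 1. For $\rho\ge0$, the generalized inverse $\rho^{-1}$ is the inverse on the support of $\rho$ (zero on its kernel), and $\rho^{-1/2}$ likewise. $D_{\max}(\rho\|\sigma)=\inf\{\lambda\in\mathbb{R}:2^\lambda\sigma\ge\rho\}$. $H_{\min}(A|B)_\rho=-\inf_{\sigma_B\in\mathcal{S}_=(\mathcal{H}_B)}D_{\max}(\rho_{AB}\|\mathbb{1}_A\otimes\sigma_B)$. $I_{\max}(A:B)_\rho=\inf_{\sigma_B\in\mathcal{S}_=(\mathcal{H}_B)}D_{\max}(\rho_{AB}\|\rho_A\otimes\sigma_B)$. *)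

theory Defs
  imports "HOL-Analysis.Analysis"
begin

text \<open>Operators on a finite-dimensional Hilbert space with orthonormal basis indexed
  by a finite type 'n are complex matrices of type complex^'n^'n.  The bipartite space
  H_AB has basis indexed by 'a \<times> 'b.\<close>

definition adj :: "complex^'n^'m \<Rightarrow> complex^'m^'n" where
  "adj A = (\<chi> i j. cnj (A $ j $ i))"

definition hermitian :: "complex^'n^'n \<Rightarrow> bool" where
  "hermitian A \<longleftrightarrow> adj A = A"

definition psd :: "complex^'n^'n \<Rightarrow> bool" where
  "psd A \<longleftrightarrow> hermitian A \<and>
     (\<forall>x :: complex^'n. 0 \<le> Re (\<Sum>i\<in>UNIV. cnj (x $ i) * (A *v x) $ i))"

definition loewner_le :: "complex^'n^'n \<Rightarrow> complex^'n^'n \<Rightarrow> bool" where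
  "loewner_le A B \<longleftrightarrow> psd (B - A)"

definition trace :: "complex^'n^'n \<Rightarrow> complex" where
  "trace A = (\<Sum>i\<in>UNIV. A $ i $ i)"

definition subnormalized_state :: "complex^'n^'n \<Rightarrow> bool" where
  "subnormalized_state \<rho> \<longleftrightarrow> psd \<rho> \<and> Re (trace \<rho>) \<le> 1"

definition normalized_state :: "complex^'n^'n \<Rightarrow> bool" where
  "normalized_state \<rho> \<longleftrightarrow> psd \<rho> \<and> trace \<rho> = 1"

definition kron :: "complex^'a^'a \<Rightarrow> complex^'b^'b \<Rightarrow> complex^('a \<times> 'b)^('a \<times> 'b)" where
  "kron A B = (\<chi> p q. A $ fst p $ fst q * B $ snd p $ snd q)"

definition ptrace_B :: "complex^('a \<times> 'b::finite)^('a \<times> 'b) \<Rightarrow> complex^'a^'a" where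
  "ptrace_B \<rho> = (\<chi> i j. \<Sum>b\<in>UNIV. \<rho> $ (i, b) $ (j, b))"

definition unitary :: "complex^'n^'n \<Rightarrow> bool" where
  "unitary U \<longleftrightarrow> U ** adj U = mat 1 \<and> adj U ** U = mat 1"

definition diag_mat :: "('n \<Rightarrow> real) \<Rightarrow> complex^'n^'n" where
  "diag_mat d = (\<chi> i j. if i = j then complex_of_real (d i) else 0)"

text \<open>Functional calculus for hermitian matrices via a spectral decomposition
  A = U diag(d) U^*, giving f(A) = U diag(f o d) U^* (independent of the choice).\<close>
definition mat_fun :: "(real \<Rightarrow> real) \<Rightarrow> complex^'n^'n \<Rightarrow> complex^'n^'n" where
  "mat_fun f A = (SOME X. \<exists>U d. unitary U \<and> A = U ** diag_mat d ** adj U \<and>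
                              X = U ** diag_mat (f \<circ> d) ** adj U)"

definition gen_inv_sqrt :: "complex^'n^'n \<Rightarrow> complex^'n^'n" where
  "gen_inv_sqrt A = mat_fun (\<lambda>t. if t > 0 then 1 / sqrt t else 0) A"

text \<open>Max-relative entropy, extended-real valued (inf of empty set = +\<infinity>).\<close>
definition Dmax :: "complex^'n^'n \<Rightarrow> complex^'n^'n \<Rightarrow> ereal" where
  "Dmax \<rho> \<sigma> = Inf {ereal l | l. loewner_le \<rho> ((2 powr l) *\<^sub>R \<sigma>)}"

definition Hmin :: "complex^('a::finite \<times> 'b::finite)^('a \<times> 'b) \<Rightarrow> ereal" where
  "Hmin \<rho> = - Inf {Dmax \<rho> (kron (mat 1 :: complex^'a^'a) \<sigma>) | \<sigma> :: complex^'b^'b. normalized_state \<sigma>}"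

definition Imax :: "complex^('a::finite \<times> 'b::finite)^('a \<times> 'b) \<Rightarrow> ereal" where
  "Imax \<rho> = Inf {Dmax \<rho> (kron (ptrace_B \<rho>) \<sigma>) | \<sigma> :: complex^'b^'b. normalized_state \<sigma>}"

definition H0_A :: "complex^('a::finite \<times> 'b::finite)^('a \<times> 'b) \<Rightarrow> ereal" where
  "H0_A \<rho> = (if rank (ptrace_B \<rho>) = 0 then -\<infinity> else ereal (log 2 (real (rank (ptrace_B \<rho>)))))"

definition cond_B_given_A :: "complex^('a::finite \<times> 'b::finite)^('a \<times> 'b) \<Rightarrow> complex^('a \<times> 'b)^('a \<times> 'b)" where
  "cond_B_given_A \<rho> =
     (let M = gen_inv_sqrt (kron (ptrace_B \<rho>) (mat 1 :: complex^'b^'b))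
      in M ** ((1 / real (rank (ptrace_B \<rho>))) *\<^sub>R \<rho>) ** M)"

end

theory Submission
  imports Defs
begin

definition cinner :: "complex^'n \<Rightarrow> complex^'n \<Rightarrow> complex" where
  "cinner x y = (\<Sum>i\<in>UNIV. cnj (x $ i) * y $ i)"

lemma scaleR_vec_nth: "(c *\<^sub>R x) $ i = complex_of_real c * (x $ i :: complex)"
  by (simp only: vector_scaleR_component) (simp add: scaleR_conv_of_real)

lemma scaleR_mat_nth: "(c *\<^sub>R A) $ i $ j = complex_of_real c * (A $ i $ j :: complex)"
  by (simp only: vector_scaleR_component) (simp add: scaleR_conv_of_real)

lemma psd_cinner: "psd A \<longleftrightarrow> hermitian A \<and> (\<forall>x. 0 \<le> Re (cinner x (A *v x)))"
  unfolding psd_def cinner_def by simp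

lemma adj_adj[simp]: "adj (adj A) = A"
  by (simp add: adj_def vec_eq_iff)

lemma adj_mult: "adj (A ** B) = adj B ** adj A"
  by (simp add: adj_def vec_eq_iff matrix_matrix_mult_def mult.commute)

lemma adj_add: "adj (A + B) = adj A + adj B"
  by (simp add: adj_def vec_eq_iff)

lemma adj_diff: "adj (A - B) = adj A - adj B"
  by (simp add: adj_def vec_eq_iff)

lemma adj_scaleR: "adj (c *\<^sub>R A) = c *\<^sub>R adj A"
  by (simp add: adj_def vec_eq_iff scaleR_mat_nth)

lemma adj_zero[simp]: "adj 0 = 0"
  by (simp add: adj_def vec_eq_iff)

lemma adj_mat_real: "adj (mat (of_real c)) = mat (of_real c)"
  by (simp add: adj_def vec_eq_iff mat_def)

lemma adj_one[simp]: "adj (mat 1) = mat 1"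
  using adj_mat_real[of 1] by simp

lemma cinner_adj: "cinner x (A *v y) = cinner (adj A *v x) y"
  by (simp add: cinner_def adj_def matrix_vector_mult_def sum_distrib_left sum_distrib_right
      mult_ac) (rule sum.swap)

lemma cinner_add_right: "cinner x (y + z) = cinner x y + cinner x z"
  by (simp add: cinner_def distrib_left sum.distrib)

lemma cinner_add_left: "cinner (x + y) z = cinner x z + cinner y z"
  by (simp add: cinner_def distrib_right sum.distrib)

lemma cinner_diff_right: "cinner x (y - z) = cinner x y - cinner x z"
  by (simp add: cinner_def right_diff_distrib sum_subtractf)

lemma cinner_diff_left: "cinner (x - y) z = cinner x z - cinner y z"
  by (simp add: cinner_def left_diff_distrib sum_subtractf)

lemma cinner_smult_right: "cinner x (c *s y) = c * cinner x y"
  by (simp add: cinner_def sum_distrib_left mult_ac)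

lemma cinner_smult_left: "cinner (c *s x) y = cnj c * cinner x y"
  by (simp add: cinner_def sum_distrib_left mult_ac)

lemma cinner_scaleR_right: "cinner x (c *\<^sub>R y) = of_real c * cinner x y"
  by (simp add: cinner_def sum_distrib_left mult_ac scaleR_vec_nth)
    (simp add: scaleR_conv_of_real sum_distrib_left mult_ac)

lemma cinner_scaleR_left: "cinner (c *\<^sub>R x) y = of_real c * cinner x y"
  by (simp add: cinner_def sum_distrib_left mult_ac scaleR_vec_nth)
    (simp add: scaleR_conv_of_real sum_distrib_left mult_ac)

lemma cinner_zero_right[simp]: "cinner x 0 = 0" and cinner_zero_left[simp]: "cinner 0 x = 0"
  by (simp_all add: cinner_def)

lemma cinner_cnj: "cnj (cinner x y) = cinner y x"
  by (simp add: cinner_def mult.commute)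

lemma cinner_self_real: "cinner x x = of_real (\<Sum>i\<in>UNIV. (cmod (x $ i))\<^sup>2)"
  unfolding cinner_def of_real_sum
  by (rule sum.cong) (auto simp: complex_norm_square[symmetric] mult.commute)

lemma cinner_self_ge0: "0 \<le> Re (cinner x x)"
  by (simp add: cinner_self_real sum_nonneg)

lemma cinner_self_Im: "Im (cinner x x) = 0"
  by (simp add: cinner_self_real)

lemma cinner_self_eq0: "cinner x x = 0 \<longleftrightarrow> x = 0"
proof
  assume "cinner x x = 0"
  then have "(\<Sum>i\<in>UNIV. (cmod (x $ i))\<^sup>2) = 0" using cinner_self_real[of x] by (metis of_real_eq_0_iff)
  then have "\<forall>i\<in>UNIV. (cmod (x $ i))\<^sup>2 = 0" by (subst (asm) sum_nonneg_eq_0_iff) auto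
  then show "x = 0" by (simp add: vec_eq_iff)
qed simp

lemma cinner_self_Re_eq0: "Re (cinner x x) = 0 \<longleftrightarrow> x = 0"
  using cinner_self_eq0[of x] cinner_self_Im[of x] by (metis complex_eqI zero_complex.sel)

lemma hermitian_cinner: "hermitian A \<Longrightarrow> cinner x (A *v y) = cinner (A *v x) y"
  unfolding hermitian_def by (metis cinner_adj)

lemma hermitian_quad_real: "hermitian A \<Longrightarrow> Im (cinner x (A *v x)) = 0"
  using hermitian_cinner[of A x x] cinner_cnj[of x "A *v x"]
  by (metis cnj.simps(2) neg_equal_zero)

lemma matrix_scaleR_left: "(c *\<^sub>R A) ** B = c *\<^sub>R (A ** (B::complex^'n^'m))"
  by (simp add: vec_eq_iff matrix_matrix_mult_def scaleR_mat_nth sum_distrib_left mult_ac)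
    (simp add: scaleR_conv_of_real sum_distrib_left mult_ac)

lemma matrix_scaleR_right: "A ** (c *\<^sub>R B) = c *\<^sub>R (A ** (B::complex^'n^'m))"
  by (simp add: vec_eq_iff matrix_matrix_mult_def scaleR_mat_nth sum_distrib_left mult_ac)
    (simp add: scaleR_conv_of_real sum_distrib_left mult_ac)

lemma matrix_diff_left: "(A - B) ** C = A ** C - B ** (C::'a::ring_1^'n^'m)"
  by (simp add: vec_eq_iff matrix_matrix_mult_def left_diff_distrib sum_subtractf)

lemma matrix_diff_right: "C ** (A - B) = C ** A - C ** (B::'a::ring_1^'n^'m)"
  by (simp add: vec_eq_iff matrix_matrix_mult_def right_diff_distrib sum_subtractf)

lemma matrix_add_left: "(A + B) ** C = A ** C + B ** (C::'a::ring_1^'n^'m)"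
  by (simp add: vec_eq_iff matrix_matrix_mult_def distrib_right sum.distrib)

lemma scaleR_mv: "(c *\<^sub>R A) *v x = c *\<^sub>R (A *v (x::complex^'n))"
  by (simp add: vec_eq_iff matrix_vector_mult_def scaleR_mat_nth scaleR_vec_nth sum_distrib_left mult_ac)
    (simp add: scaleR_conv_of_real sum_distrib_left mult_ac)

lemma hermitian_conj: "hermitian X \<Longrightarrow> hermitian (adj Y ** X ** Y)"
  unfolding hermitian_def by (simp add: adj_mult matrix_mul_assoc)

lemma psd_conj: assumes "psd X" shows "psd (adj Y ** X ** Y)"
  unfolding psd_cinner
proof (intro conjI allI)
  show "hermitian (adj Y ** X ** Y)" using assms hermitian_conj psd_cinner by blast
  fix x
  have "cinner x ((adj Y ** X ** Y) *v x) = cinner (Y *v x) (X *v (Y *v x))"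
    by (simp add: cinner_adj matrix_vector_mul_assoc[symmetric])
  then show "0 \<le> Re (cinner x ((adj Y ** X ** Y) *v x))"
    using assms psd_cinner by auto
qed

lemma psd_add: "psd A \<Longrightarrow> psd B \<Longrightarrow> psd (A + B)"
  unfolding psd_cinner hermitian_def
  by (simp add: adj_add matrix_vector_mult_add_rdistrib cinner_add_right)

lemma psd_scaleR: "psd A \<Longrightarrow> 0 \<le> c \<Longrightarrow> psd (c *\<^sub>R A)"
  unfolding psd_cinner hermitian_def
  by (simp add: adj_scaleR scaleR_mv cinner_scaleR_right)

lemma psd_zero_mat[simp]: "psd 0"
  unfolding psd_cinner hermitian_def by simp

lemma quad_nonneg_imp: fixes a b :: real
  assumes "\<forall>t. 0 \<le> 2 * t * a + t\<^sup>2 * b" shows "a = 0"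
proof (rule ccontr)
  assume "a \<noteq> 0"
  define c where "c = \<bar>b\<bar> + 1"
  have c: "c > 0" "b < c" unfolding c_def by auto
  define t where "t = - a / c"
  have a2: "a\<^sup>2 > 0" using \<open>a \<noteq> 0\<close> by simp
  have e1: "2 * t * a = - 2 * a\<^sup>2 / c" unfolding t_def by (simp add: power2_eq_square)
  have e2: "t\<^sup>2 * b = a\<^sup>2 * b / c\<^sup>2" unfolding t_def by (simp add: power_divide)
  have "a\<^sup>2 * b / c\<^sup>2 \<le> a\<^sup>2 * c / c\<^sup>2"
    using c a2 by (intro divide_right_mono mult_left_mono) auto
  also have "\<dots> = a\<^sup>2 / c" using c by (simp add: power2_eq_square)
  finally have "2 * t * a + t\<^sup>2 * b \<le> - 2 * a\<^sup>2 / c + a\<^sup>2 / c" using e1 e2 by linarith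
  also have "\<dots> = - (a\<^sup>2 / c)" by simp
  also have "\<dots> < 0" using a2 c by simp
  finally show False using assms by (metis not_le)
qed

lemma norm_sq_cinner: "(norm x)\<^sup>2 = Re (cinner x x)"
  by (simp add: norm_vec_def L2_set_def cinner_self_real sum_nonneg)

lemma cinner_sum_right: "cinner x (sum f F) = (\<Sum>j\<in>F. cinner x (f j))"
  by (simp add: cinner_def sum_distrib_left sum_component) (rule sum.swap)

lemma continuous_cinner_right: "continuous_on S (\<lambda>x. cinner v (x :: complex^'n))"
  unfolding cinner_def by (intro continuous_intros)

lemma continuous_quad: "continuous_on S (\<lambda>x. Re (cinner x (A *v (x :: complex^'n))))"
  unfolding cinner_def matrix_vector_mult_def
  by (simp only: vec_lambda_beta) (intro continuous_intros)

lemma scaleR_as_smult: "c *\<^sub>R x = (complex_of_real c) *s (x :: complex^'n)"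
  by (simp add: vec_eq_iff) (simp add: scaleR_conv_of_real)

lemma mv_scaleR: "A *v (c *\<^sub>R x) = c *\<^sub>R (A *v (x :: complex^'n))"
  by (simp add: vec_eq_iff matrix_vector_mult_def) (simp add: scaleR_conv_of_real sum_distrib_left mult_ac)

lemma mv_smult: "A *v (c *s x) = c *s (A *v (x :: complex^'n))"
  by (simp add: vec_eq_iff matrix_vector_mult_def sum_distrib_left mult_ac)

lemma cinner_one: "Re (cinner x x) = 1 \<Longrightarrow> cinner x x = 1"
  using cinner_self_Im[of x] by (simp add: complex_eq_iff)

lemma eigvec_exists:
  fixes A :: "complex^'n^'n" and W :: "(complex^'n) set"
  assumes herm: "hermitian A"
    and Wadd: "\<forall>x\<in>W. \<forall>y\<in>W. x + y \<in> W"
    and Wsc: "\<forall>x\<in>W. \<forall>c. c *s x \<in> W"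
    and WA: "\<forall>x\<in>W. A *v x \<in> W"
    and Wcl: "closed W"
    and ne: "x1 \<in> W" "x1 \<noteq> 0"
  shows "\<exists>x\<in>W. cinner x x = 1 \<and> (\<exists>\<mu>::real. A *v x = \<mu> *\<^sub>R x)"
proof -
  define Q where "Q y = Re (cinner y (A *v y))" for y
  define N where "N y = Re (cinner y y)" for y :: "complex^'n"
  have WR: "c *\<^sub>R x \<in> W" if "x \<in> W" for c x using Wsc that by (simp add: scaleR_as_smult)
  define S where "S = W \<inter> sphere 0 1"
  have "compact S" unfolding S_def
    by (simp add: compact_eq_bounded_closed Wcl bounded_Int closed_Int)
  moreover have "(1 / norm x1) *\<^sub>R x1 \<in> S" using ne WR unfolding S_def by auto
  then have "S \<noteq> {}" by auto
  moreover have "continuous_on S Q" unfolding Q_def by (rule continuous_quad)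
  ultimately obtain x0 where x0S: "x0 \<in> S" and x0max: "\<forall>y\<in>S. Q y \<le> Q x0"
    using continuous_attains_sup by metis
  have x0W: "x0 \<in> W" using x0S S_def by auto
  have "N x0 = 1" using x0S unfolding S_def N_def by (simp add: norm_sq_cinner[symmetric])
  then have x0n: "cinner x0 x0 = 1" unfolding N_def by (rule cinner_one)
  define M where "M = Q x0"
  have Qsc: "Q (c *\<^sub>R y) = c\<^sup>2 * Q y" for c y
    unfolding Q_def by (simp add: mv_scaleR cinner_scaleR_left cinner_scaleR_right power2_eq_square)
  have claim1: "Q y \<le> M * N y" if "y \<in> W" for y
  proof (cases "y = 0")
    case True then show ?thesis by (simp add: Q_def N_def)
  next
    case False
    define s where "s = 1 / norm y"
    have "s *\<^sub>R y \<in> S" unfolding S_def s_def using that WR False by auto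
    then have "Q (s *\<^sub>R y) \<le> M" using x0max M_def by auto
    then have "s\<^sup>2 * Q y \<le> M" by (simp add: Qsc)
    then have "(norm y)\<^sup>2 * (s\<^sup>2 * Q y) \<le> (norm y)\<^sup>2 * M" by (simp add: mult_left_mono)
    moreover have "(norm y)\<^sup>2 * s\<^sup>2 = 1" unfolding s_def using False by (simp add: power_divide)
    ultimately have "Q y \<le> (norm y)\<^sup>2 * M" by (metis mult.assoc mult_1)
    then show ?thesis by (simp add: N_def norm_sq_cinner mult.commute)
  qed
  have claim2: "Re (cinner y (A *v x0)) = 0" if "y \<in> W" "cinner x0 y = 0" for y
  proof -
    define a where "a = Re (cinner y (A *v x0))"
    have "0 \<le> 2 * t * (- a) + t\<^sup>2 * (M * N y - Q y)" for t
    proof -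
      have zW: "x0 + t *\<^sub>R y \<in> W" using Wadd WR x0W that by auto
      have c2: "cinner y x0 = 0" using that(2) cinner_cnj[of x0 y] by simp
      have h1: "Re (cinner x0 (A *v y)) = a"
        unfolding a_def using hermitian_cinner[OF herm, of x0 y] cinner_cnj[of y "A *v x0"]
        by (metis cnj.sel(1))
      have "Q (x0 + t *\<^sub>R y) = M + 2 * t * a + t\<^sup>2 * Q y"
        unfolding Q_def M_def
        by (simp add: matrix_vector_right_distrib mv_scaleR cinner_add_left cinner_add_right
            cinner_scaleR_left cinner_scaleR_right h1 a_def power2_eq_square algebra_simps)
      moreover have "N (x0 + t *\<^sub>R y) = 1 + t\<^sup>2 * N y"
        unfolding N_def
        by (simp add: cinner_add_left cinner_add_right cinner_scaleR_left cinner_scaleR_right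
            that(2) c2 x0n power2_eq_square)
      ultimately show ?thesis using claim1[OF zW] by (simp add: algebra_simps)
    qed
    then have "- a = 0" by (intro quad_nonneg_imp) auto
    then show ?thesis unfolding a_def by simp
  qed
  have claim3: "cinner y (A *v x0) = 0" if "y \<in> W" "cinner x0 y = 0" for y
  proof -
    have re0: "Re (cinner y (A *v x0)) = 0" using claim2 that by auto
    moreover have "\<i> *s y \<in> W" using Wsc that by auto
    moreover have "cinner x0 (\<i> *s y) = 0" using that by (simp add: cinner_smult_right)
    ultimately have "Re (cinner (\<i> *s y) (A *v x0)) = 0" using claim2 by auto
    then have "Im (cinner y (A *v x0)) = 0" by (simp add: cinner_smult_left)
    with re0 show ?thesis by (simp add: complex_eq_iff)
  qed
  define \<mu> where "\<mu> = Re (cinner x0 (A *v x0))"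
  have mu: "cinner x0 (A *v x0) = of_real \<mu>"
    unfolding \<mu>_def using hermitian_quad_real[OF herm, of x0] by (simp add: complex_eq_iff)
  define z where "z = A *v x0 - \<mu> *\<^sub>R x0"
  have zW: "z \<in> W" unfolding z_def using Wadd WR WA x0W
    by (metis add_uminus_conv_diff scaleR_minus_left)
  have "cinner x0 z = 0" unfolding z_def
    by (simp add: cinner_diff_right cinner_scaleR_right mu x0n)
  then have "cinner z (A *v x0) = 0" using claim3 zW by auto
  moreover have "cinner z x0 = 0" using \<open>cinner x0 z = 0\<close> cinner_cnj[of x0 z] by simp
  ultimately have "cinner z z = 0"
    by (simp add: z_def cinner_diff_right cinner_scaleR_right)
  then have "z = 0" by (simp add: cinner_self_eq0)
  then have "A *v x0 = \<mu> *\<^sub>R x0" unfolding z_def by simp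
  then show ?thesis using x0W x0n by blast
qed

lemma cinner_axis: "cinner v (axis i 1) = cnj (v $ i)"
  unfolding cinner_def axis_def by (simp add: if_distrib cong: if_cong)

lemma compl_nonzero:
  fixes v :: "'m \<Rightarrow> complex^'n"
  assumes fin: "finite F" and card: "card F < CARD('n)"
    and orth: "\<forall>i\<in>F. \<forall>j\<in>F. cinner (v i) (v j) = (if i = j then 1 else 0)"
  shows "\<exists>x::complex^'n. x \<noteq> 0 \<and> (\<forall>j\<in>F. cinner (v j) x = 0)"
proof (rule ccontr)
  assume H: "\<not> ?thesis"
  define w where "w i = axis i 1 - (\<Sum>j\<in>F. cinner (v j) (axis i 1) *s v j)" for i :: 'n
  have w0: "w i = 0" for i
  proof -
    have "cinner (v l) (w i) = 0" if l: "l \<in> F" for l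
    proof -
      have "cinner (v l) (w i) = cinner (v l) (axis i 1)
          - (\<Sum>j\<in>F. cinner (v j) (axis i 1) * (if l = j then 1 else 0))"
        unfolding w_def using orth l by (simp add: cinner_diff_right cinner_sum_right cinner_smult_right)
      also have "\<dots> = 0" using l fin by (simp add: if_distrib cong: if_cong)
      finally show ?thesis .
    qed
    then show ?thesis using H by blast
  qed
  have one: "(\<Sum>j\<in>F. cnj (v j $ i) * v j $ i) = 1" for i
  proof -
    have "(w i) $ i = 0" using w0 by simp
    then show ?thesis unfolding w_def by (simp add: sum_component cinner_axis)
  qed
  have "of_nat CARD('n) = (\<Sum>i\<in>(UNIV::'n set). (\<Sum>j\<in>F. cnj (v j $ i) * v j $ i))"
    by (simp add: one)
  also have "\<dots> = (\<Sum>j\<in>F. cinner (v j) (v j))"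
    unfolding cinner_def by (rule sum.swap)
  also have "\<dots> = of_nat (card F)" using orth by simp
  finally have "CARD('n) = card F" using of_nat_eq_iff by blast
  then show False using card by simp
qed

lemma eigen_family:
  fixes A :: "complex^'n^'n"
  assumes herm: "hermitian A"
  shows "finite F \<Longrightarrow> \<exists>v (l::'n \<Rightarrow> real). (\<forall>i\<in>F. \<forall>j\<in>F. cinner (v i) (v j) = (if i = j then 1 else 0))
     \<and> (\<forall>i\<in>F. A *v v i = l i *\<^sub>R v i)"
proof (induction F rule: finite_induct)
  case empty
  then show ?case by auto
next
  case (insert a F)
  obtain v l where orth: "\<forall>i\<in>F. \<forall>j\<in>F. cinner (v i) (v j) = (if i = j then 1 else 0)"
    and eig: "\<forall>i\<in>F. A *v v i = l i *\<^sub>R v i" using insert.IH by blast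
  have "F \<subset> UNIV" using insert by auto
  then have "card F < CARD('n)" by (simp add: psubset_card_mono)
  then obtain x1 where x1: "x1 \<noteq> 0" "\<forall>j\<in>F. cinner (v j) x1 = 0"
    using compl_nonzero[OF insert(1) _ orth] by blast
  define W where "W = {x. \<forall>j\<in>F. cinner (v j) x = 0}"
  have "\<exists>x\<in>W. cinner x x = 1 \<and> (\<exists>\<mu>::real. A *v x = \<mu> *\<^sub>R x)"
  proof (rule eigvec_exists[OF herm])
    show "\<forall>x\<in>W. \<forall>y\<in>W. x + y \<in> W" unfolding W_def by (simp add: cinner_add_right)
    show "\<forall>x\<in>W. \<forall>c. c *s x \<in> W" unfolding W_def by (simp add: cinner_smult_right)
    show "\<forall>x\<in>W. A *v x \<in> W" unfolding W_def
      using eig by (simp add: hermitian_cinner[OF herm] cinner_scaleR_left)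
    have "W = (\<Inter>j\<in>F. {x. cinner (v j) x = 0})" unfolding W_def by auto
    moreover have "closed {x. cinner (v j) x = 0}" for j
      by (intro closed_Collect_eq continuous_cinner_right continuous_on_const)
    ultimately show "closed W" by auto
    show "x1 \<in> W" "x1 \<noteq> 0" using x1 W_def by auto
  qed
  then obtain x \<mu> where xW: "x \<in> W" and xn: "cinner x x = 1" and xe: "A *v x = \<mu> *\<^sub>R x" by blast
  have xo: "cinner (v j) x = 0" "cinner x (v j) = 0" if "j \<in> F" for j
    using xW that W_def cinner_cnj[of "v j" x] by auto
  show ?case
    apply (rule exI[of _ "v(a := x)"], rule exI[of _ "l(a := \<mu>)"])
    using orth eig xo xn xe insert(2) by auto
qed

lemma diag_mat_mult_right: "(U ** diag_mat d) $ i $ j = U $ i $ j * of_real (d j)"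
  unfolding diag_mat_def matrix_matrix_mult_def
  by (simp add: if_distrib cong: if_cong)

lemma diag_mat_mult_left: "(diag_mat d ** U) $ i $ j = of_real (d i) * U $ i $ j"
proof -
  have h: "\<And>k. (if i = k then complex_of_real (d i) else 0) * U $ k $ j
      = (if i = k then complex_of_real (d i) * U $ k $ j else 0)" by simp
  have "(diag_mat d ** U) $ i $ j = (\<Sum>k\<in>UNIV. (if i = k then complex_of_real (d i) else 0) * U $ k $ j)"
    unfolding diag_mat_def matrix_matrix_mult_def by (simp cong: if_cong)
  also have "\<dots> = (\<Sum>k\<in>UNIV. if i = k then complex_of_real (d i) * U $ k $ j else 0)"
    by (simp only: h)
  finally show ?thesis by simp
qed

lemma spectral:
  fixes A :: "complex^'n^'n"
  assumes herm: "hermitian A"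
  shows "\<exists>U d. unitary U \<and> A = U ** diag_mat d ** adj U"
proof -
  have "\<exists>(v::'n \<Rightarrow> complex^'n) (l::'n\<Rightarrow>real). (\<forall>i j. cinner (v i) (v j) = (if i = j then 1 else 0)) \<and> (\<forall>i. A *v v i = l i *\<^sub>R v i)"
    using eigen_family[OF herm, of UNIV] by simp
  then obtain v :: "'n \<Rightarrow> complex^'n" and l :: "'n \<Rightarrow> real" where orth: "\<forall>i j. cinner (v i) (v j) = (if i = j then 1 else 0)"
    and eig: "\<forall>i. A *v v i = l i *\<^sub>R v i" by blast
  define U :: "complex^'n^'n" where "U = (\<chi> i j. v j $ i)"
  have "adj U ** U = mat 1"
    using orth unfolding U_def adj_def matrix_matrix_mult_def mat_def cinner_def
    by (simp add: vec_eq_iff)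
  then have UU: "U ** adj U = mat 1" using matrix_left_right_inverse by blast
  have "A ** U = U ** diag_mat l"
  proof -
    have "(A ** U) $ i $ j = (A *v v j) $ i" for i j
      unfolding U_def matrix_matrix_mult_def matrix_vector_mult_def by simp
    then show ?thesis using eig
      by (simp add: vec_eq_iff diag_mat_mult_right U_def) (simp add: scaleR_conv_of_real mult.commute)
  qed
  then have "A = U ** diag_mat l ** adj U"
  proof -
    assume AU: "A ** U = U ** diag_mat l"
    have "A = A ** (U ** adj U)" using UU by simp
    also have "\<dots> = (A ** U) ** adj U" by (simp add: matrix_mul_assoc)
    finally show ?thesis using AU by simp
  qed
  moreover have "unitary U" unfolding unitary_def using UU \<open>adj U ** U = mat 1\<close> by simp
  ultimately show ?thesis by blast
qed

definition Fm :: "complex^'n^'n \<Rightarrow> ('n \<Rightarrow> real) \<Rightarrow> complex^'n^'n" where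
  "Fm U x = U ** diag_mat x ** adj U"

lemma mat_fun_spec:
  assumes "hermitian (A :: complex^'n^'n)"
  shows "\<exists>U d. unitary U \<and> A = Fm U d \<and> mat_fun f A = Fm U (f \<circ> d)"
proof -
  obtain U d where "unitary U" "A = U ** diag_mat d ** adj U" using spectral[OF assms] by blast
  then have ex: "\<exists>X U d. unitary U \<and> A = U ** diag_mat d ** adj U \<and> X = U ** diag_mat (f \<circ> d) ** adj U"
    by blast
  show ?thesis unfolding mat_fun_def Fm_def using someI_ex[OF ex] by blast
qed

lemma diag_mat_mult: "diag_mat a ** diag_mat b = diag_mat (\<lambda>i. a i * b i)"
  by (simp add: vec_eq_iff diag_mat_mult_left) (simp add: diag_mat_def)

lemma diag_mat_add: "diag_mat a + diag_mat b = diag_mat (\<lambda>i. a i + b i)"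
  by (simp add: vec_eq_iff diag_mat_def)

lemma diag_mat_one: "diag_mat (\<lambda>i. 1) = mat 1"
  by (simp add: vec_eq_iff diag_mat_def mat_def)

lemma adj_diag: "adj (diag_mat a) = diag_mat a"
  by (simp add: vec_eq_iff diag_mat_def adj_def)

lemma unitaryD: "unitary U \<Longrightarrow> U ** adj U = mat 1" "unitary U \<Longrightarrow> adj U ** U = mat 1"
  by (simp_all add: unitary_def)

lemma unitary_cancel: assumes "unitary U"
  shows "X ** U ** adj U = X" "X ** adj U ** U = X"
proof -
  show "X ** U ** adj U = X" using unitaryD[OF assms] by (metis matrix_mul_assoc matrix_mul_rid)
  show "X ** adj U ** U = X" using unitaryD[OF assms] by (metis matrix_mul_assoc matrix_mul_rid)
qed

lemma Fm_mult: assumes "unitary U" shows "Fm U a ** Fm U b = Fm U (\<lambda>i. a i * b i)"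
proof -
  have "Fm U a ** Fm U b = U ** diag_mat a ** (adj U ** U) ** diag_mat b ** adj U"
    unfolding Fm_def by (simp add: matrix_mul_assoc unitary_cancel[OF assms])
  also have "\<dots> = U ** (diag_mat a ** diag_mat b) ** adj U"
    using unitaryD[OF assms] by (simp add: matrix_mul_assoc unitary_cancel[OF assms])
  finally show ?thesis by (simp add: diag_mat_mult Fm_def)
qed

lemma Fm_adj: "adj (Fm U a) = Fm U a"
  unfolding Fm_def by (simp add: adj_mult adj_diag matrix_mul_assoc)

lemma Fm_hermitian: "hermitian (Fm U a)"
  unfolding hermitian_def by (rule Fm_adj)

lemma Fm_one: "unitary U \<Longrightarrow> Fm U (\<lambda>i. 1) = mat 1"
  unfolding Fm_def diag_mat_one using unitaryD by simp

lemma Fm_add: "Fm U a + Fm U b = Fm U (\<lambda>i. a i + b i)"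
  unfolding Fm_def by (simp add: matrix_add_ldistrib matrix_add_left diag_mat_add[symmetric])

lemma Fm_cong: "(\<And>i. a i = b i) \<Longrightarrow> Fm U a = Fm U b"
  by (metis ext)

lemma cinner_axis_left: "cinner (axis i 1) v = v $ i"
proof -
  have "\<And>k. cnj (axis i 1 $ k) * v $ k = (if k = i then v $ k else 0)" by (simp add: axis_def)
  then show ?thesis unfolding cinner_def by simp
qed

lemma Fm_psd_nonneg: assumes "unitary U" "psd (Fm U d)" shows "0 \<le> d i"
proof -
  have "adj U ** Fm U d ** U = diag_mat d"
    using unitaryD[OF assms(1)] unfolding Fm_def by (simp add: matrix_mul_assoc unitary_cancel[OF assms(1)])
  then have "psd (diag_mat d)" using psd_conj[OF assms(2), of U] by simp
  then have "0 \<le> Re (cinner (axis i 1) (diag_mat d *v axis i 1))" unfolding psd_cinner by blast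
  moreover have "(diag_mat d *v axis i 1) $ i = of_real (d i)"
    unfolding diag_mat_def matrix_vector_mult_def axis_def by (simp add: if_distrib cong: if_cong)
  ultimately show ?thesis by (simp add: cinner_axis_left)
qed

lemma Fm_comm:
  assumes U: "unitary U" and BK: "B ** Fm U d = Fm U d ** B"
  shows "B ** Fm U (f \<circ> d) = Fm U (f \<circ> d) ** B"
proof -
  define C where "C = adj U ** B ** U"
  have "U ** C ** adj U = (U ** adj U) ** B ** (U ** adj U)"
    unfolding C_def by (simp add: matrix_mul_assoc unitary_cancel[OF U])
  then have B: "B = U ** C ** adj U"
    using unitaryD[OF U] by simp
  have CD: "C ** diag_mat d = diag_mat d ** C"
  proof -
    have "adj U ** (B ** Fm U d) ** U = adj U ** (Fm U d ** B) ** U" using BK by simp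
    then have "adj U ** B ** U ** diag_mat d ** adj U ** U = diag_mat d ** adj U ** B ** U"
      unfolding Fm_def using unitaryD[OF U]
      by (simp add: matrix_mul_assoc unitary_cancel[OF U])
    then show ?thesis unfolding C_def unitary_cancel(2)[OF U] by (simp add: matrix_mul_assoc unitary_cancel[OF U])
  qed
  have "C ** diag_mat (f \<circ> d) = diag_mat (f \<circ> d) ** C"
  proof -
    have e: "C $ i $ j * of_real (d j) = of_real (d i) * C $ i $ j" for i j
      using arg_cong[OF CD, of "\<lambda>X. X $ i $ j"] by (simp add: diag_mat_mult_right diag_mat_mult_left)
    have "C $ i $ j * of_real (f (d j)) = of_real (f (d i)) * C $ i $ j" for i j
    proof (cases "d i = d j")
      case True then show ?thesis by (simp add: mult.commute)
    next
      case False
      then have "C $ i $ j = 0" using e[of i j]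
        by (metis mult.commute mult_cancel_left of_real_eq_iff)
      then show ?thesis by simp
    qed
    then show ?thesis by (simp add: vec_eq_iff diag_mat_mult_right diag_mat_mult_left)
  qed
  then have "U ** (C ** diag_mat (f \<circ> d)) ** adj U = U ** (diag_mat (f \<circ> d) ** C) ** adj U" by simp
  then show ?thesis unfolding B Fm_def
    by (simp add: matrix_mul_assoc unitary_cancel[OF U])
qed

lemma sum_UNIV_pair: "(\<Sum>p\<in>(UNIV::('a::finite \<times> 'b::finite) set). f p) = (\<Sum>a\<in>UNIV. \<Sum>b\<in>UNIV. f (a, b))"
proof -
  have "(\<Sum>a\<in>UNIV. \<Sum>b\<in>UNIV. f (a, b)) = (\<Sum>p\<in>(UNIV::'a set) \<times> (UNIV::'b set). f p)"
    by (simp add: sum.cartesian_product)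
  then show ?thesis by simp
qed
lemma kron_nth: "(kron A B) $ p $ r = A $ fst p $ fst r * B $ snd p $ snd r"
  unfolding kron_def by simp
lemma mm_nth: "(X ** Y) $ p $ q = (\<Sum>r\<in>UNIV. X $ p $ r * Y $ r $ q)"
  unfolding matrix_matrix_mult_def by simp
lemma kron_mult: "kron A B ** kron C D = kron (A ** C) (B ** D)"
proof -
  have "(kron A B ** kron C D) $ p $ q = (kron (A ** C) (B ** D)) $ p $ q" for p q
  proof -
    have "(kron A B ** kron C D) $ p $ q = (\<Sum>a\<in>UNIV. \<Sum>b\<in>UNIV. (A $ fst p $ a * C $ a $ fst q) * (B $ snd p $ b * D $ b $ snd q))"
      unfolding mm_nth kron_nth sum_UNIV_pair fst_conv snd_conv by (simp only: mult_ac)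
    also have "\<dots> = (kron (A ** C) (B ** D)) $ p $ q"
      unfolding kron_nth mm_nth by (simp only: sum_product)
    finally show ?thesis .
  qed
  then show ?thesis by (simp add: vec_eq_iff)
qed

lemma adj_kron: "adj (kron A B) = kron (adj A) (adj B)"
  by (simp add: vec_eq_iff kron_def adj_def)

lemma kron_mv: "(kron A B *v x) $ (a, b) = (\<Sum>a'\<in>UNIV. \<Sum>b'\<in>UNIV. A $ a $ a' * B $ b $ b' * x $ (a', b'))"
  by (simp add: kron_def matrix_vector_mult_def sum_UNIV_pair)

definition tv :: "complex^'a \<Rightarrow> 'b::finite \<Rightarrow> complex^('a \<times> 'b)" where
  "tv y b = (\<chi> p. if snd p = b then y $ fst p else 0)"

lemma tv_nth: "tv y b $ (a, c) = (if c = b then y $ a else 0)"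
  by (simp add: tv_def)

lemma sum_delta_mult_right: "(\<Sum>c\<in>(UNIV::'c::finite set). f c * (if c = b then x c else 0)) = f b * (x b :: 'x::comm_ring_1)"
proof -
  have "(\<Sum>c\<in>UNIV. f c * (if c = b then x c else 0)) = (\<Sum>c\<in>UNIV. if c = b then f c * x c else 0)"
    by (rule sum.cong) auto
  then show ?thesis by (simp add: sum.delta sum.delta')
qed

lemma sum_delta_mult_left: "(\<Sum>c\<in>(UNIV::'c::finite set). (if c = b then x c else 0) * f c) = x b * (f b :: 'x::comm_ring_1)"
  using sum_delta_mult_right[of f b x] by (simp add: mult.commute)

lemma cinner_tv: "cinner (tv y b) (\<rho> *v tv z b) =
   (\<Sum>a\<in>UNIV. cnj (y $ a) * (\<Sum>a'\<in>UNIV. \<rho> $ (a, b) $ (a', b) * z $ a'))"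
proof -
  have "cinner (tv y b) (\<rho> *v tv z b) =
     (\<Sum>a\<in>UNIV. \<Sum>c\<in>UNIV. cnj (tv y b $ (a, c)) * (\<Sum>a'\<in>UNIV. \<Sum>c'\<in>UNIV. \<rho> $ (a, c) $ (a', c') * tv z b $ (a', c')))"
    unfolding cinner_def matrix_vector_mult_def by (simp add: sum_UNIV_pair)
  also have "\<dots> = (\<Sum>a\<in>UNIV. \<Sum>c\<in>UNIV. (if c = b then cnj (y $ a) else 0) * (\<Sum>a'\<in>UNIV. \<rho> $ (a, c) $ (a', b) * z $ a'))"
    unfolding tv_nth by (simp only: sum_delta_mult_right) (simp only: if_distrib[of cnj] complex_cnj_zero)
  also have "\<dots> = (\<Sum>a\<in>UNIV. cnj (y $ a) * (\<Sum>a'\<in>UNIV. \<rho> $ (a, b) $ (a', b) * z $ a'))"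
    by (simp only: sum_delta_mult_left)
  finally show ?thesis .
qed

lemma sum_cinner_tv: "(\<Sum>b\<in>UNIV. cinner (tv y b) (\<rho> *v tv z b)) = cinner y (ptrace_B \<rho> *v z)"
proof -
  have "(\<Sum>b\<in>UNIV. cinner (tv y b) (\<rho> *v tv z b)) =
     (\<Sum>a\<in>UNIV. \<Sum>b\<in>UNIV. cnj (y $ a) * (\<Sum>a'\<in>UNIV. \<rho> $ (a, b) $ (a', b) * z $ a'))"
    unfolding cinner_tv by (rule sum.swap)
  also have "\<dots> = (\<Sum>a\<in>UNIV. cnj (y $ a) * (\<Sum>b\<in>UNIV. \<Sum>a'\<in>UNIV. \<rho> $ (a, b) $ (a', b) * z $ a'))"
    by (simp only: sum_distrib_left)
  also have "\<dots> = (\<Sum>a\<in>UNIV. cnj (y $ a) * (\<Sum>a'\<in>UNIV. \<Sum>b\<in>UNIV. \<rho> $ (a, b) $ (a', b) * z $ a'))"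
    by (subst sum.swap) (rule refl)
  also have "\<dots> = cinner y (ptrace_B \<rho> *v z)"
    unfolding cinner_def ptrace_B_def matrix_vector_mult_def by (simp add: sum_distrib_right)
  finally show ?thesis .
qed

lemma psd_zero:
  assumes A: "psd A" and q: "Re (cinner y (A *v y)) = 0"
  shows "A *v y = 0"
proof -
  have herm: "hermitian A" using A psd_cinner by blast
  define z where "z = A *v y"
  define a where "a = Re (cinner z (A *v y))"
  have "0 \<le> 2 * t * a + t\<^sup>2 * Re (cinner z (A *v z))" for t
  proof -
    have "0 \<le> Re (cinner (y + t *\<^sub>R z) (A *v (y + t *\<^sub>R z)))" using A psd_cinner by blast
    moreover have h1: "Re (cinner y (A *v z)) = a"
      unfolding a_def using hermitian_cinner[OF herm, of y z] cinner_cnj[of z "A *v y"]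
      by (metis cnj.sel(1))
    ultimately show ?thesis
      by (simp add: matrix_vector_right_distrib mv_scaleR cinner_add_left cinner_add_right
            cinner_scaleR_left cinner_scaleR_right q a_def power2_eq_square algebra_simps)
  qed
  then have "a = 0" by (rule quad_nonneg_imp[OF allI])
  then have "Re (cinner z z) = 0" unfolding a_def z_def by simp
  then show ?thesis unfolding z_def using cinner_self_Re_eq0 by blast
qed

lemma mat_sum_nth: "(sum M S) $ i $ j = (\<Sum>b\<in>S. M b $ i $ j)"
  by (simp add: sum_component)

lemma mat_sum_mv: "(sum M S) *v x = (\<Sum>b\<in>S. M b *v x)"
  apply (simp add: vec_eq_iff matrix_vector_mult_def sum_component mat_sum_nth sum_distrib_right)
  apply (rule allI, rule sum.swap)
  done

lemma psd_sum: "finite S \<Longrightarrow> (\<And>b. b \<in> S \<Longrightarrow> psd (M b)) \<Longrightarrow> psd (sum M S)"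
  by (induction S rule: finite_induct) (auto intro: psd_add)

definition Eb :: "'b \<Rightarrow> complex^('a::finite \<times> 'b::finite)^'a" where
  "Eb b = (\<chi> a p. if fst p = a \<and> snd p = b then 1 else 0)"

definition Ea :: "'a \<Rightarrow> complex^('a::finite \<times> 'b::finite)^'b" where
  "Ea a = (\<chi> b p. if fst p = a \<and> snd p = b then 1 else 0)"

lemma sum_if_eq: "(\<And>k. f k = (if k = c then g else 0)) \<Longrightarrow> (\<Sum>k\<in>(UNIV::'c::finite set). f k) = (g::'x::comm_monoid_add)"
proof -
  assume h: "\<And>k. f k = (if k = c then g else 0)"
  have "(\<Sum>k\<in>UNIV. f k) = (\<Sum>k\<in>UNIV. if k = c then g else 0)" using h by simp
  then show ?thesis by simp
qed

lemma adjEb_mult: "(adj (Eb b) ** X) $ p $ c = (if snd p = b then X $ fst p $ c else 0)"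
proof -
  have "(adj (Eb b) ** X) $ p $ c = (\<Sum>k\<in>UNIV. cnj (if fst p = k \<and> snd p = b then 1 else 0) * X $ k $ c)"
    by (simp only: matrix_matrix_mult_def adj_def Eb_def vec_lambda_beta)
  also have "\<dots> = (if snd p = b then X $ fst p $ c else 0)"
    by (rule sum_if_eq[where c="fst p"]) auto
  finally show ?thesis .
qed

lemma mult_Eb: "(Y ** Eb b) $ r $ q = (if snd q = b then Y $ r $ fst q else 0)"
proof -
  have "(Y ** Eb b) $ r $ q = (\<Sum>k\<in>UNIV. Y $ r $ k * (if fst q = k \<and> snd q = b then 1 else 0))"
    by (simp only: matrix_matrix_mult_def Eb_def vec_lambda_beta)
  also have "\<dots> = (if snd q = b then Y $ r $ fst q else 0)"
    by (rule sum_if_eq[where c="fst q"]) auto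
  finally show ?thesis .
qed

lemma Eb_mult: "(Eb b ** Z) $ a $ c = Z $ (a, b) $ c"
  unfolding matrix_matrix_mult_def Eb_def
  by (simp, rule sum_if_eq[where c="(a,b)"], auto)

lemma mult_adjEb: "(Z ** adj (Eb b)) $ r $ a = Z $ r $ (a, b)"
  unfolding matrix_matrix_mult_def adj_def Eb_def
  by (simp, rule sum_if_eq[where c="(a,b)"], auto)

lemma kron_one_right_sum: "kron A (mat 1) = (\<Sum>b\<in>UNIV. adj (Eb b) ** A ** Eb b)"
proof -
  have that: "(\<Sum>b\<in>UNIV. (adj (Eb b) ** A ** Eb b) $ p $ q) = kron A (mat 1) $ p $ q" for p q
    by (rule sum_if_eq[where c="snd q"]) (auto simp: mult_Eb adjEb_mult kron_def mat_def)
  then show ?thesis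
    unfolding vec_eq_iff mat_sum_nth by (intro allI) (rule sym, rule that)
qed

lemma ptrace_sum: "ptrace_B \<rho> = (\<Sum>b\<in>UNIV. Eb b ** \<rho> ** adj (Eb b))"
  by (simp add: vec_eq_iff mat_sum_nth ptrace_B_def mult_adjEb Eb_mult)

lemma kron_one_one: "kron (mat 1 :: complex^'a^'a) (mat 1 :: complex^'b^'b) = mat 1"
  by (simp add: vec_eq_iff kron_def mat_def prod_eq_iff)

lemma sum_adjEb_Eb: "(\<Sum>b\<in>UNIV. adj (Eb b :: complex^('a::finite \<times> 'b::finite)^'a) ** Eb b) = mat 1"
  using kron_one_right_sum[of "mat 1 :: complex^'a^'a", where 'b='b] by (simp add: kron_one_one)

lemma quad_sum_conj: "cinner x ((\<Sum>b\<in>S. adj (Y b) ** A ** Y b) *v x) = (\<Sum>b\<in>S. cinner (Y b *v x) (A *v (Y b *v x)))"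
  by (simp add: mat_sum_mv cinner_sum_right cinner_adj matrix_vector_mul_assoc[symmetric])

lemma Re_sum_zero: assumes "finite S" "\<And>b. b \<in> S \<Longrightarrow> 0 \<le> Re (f b)" "Re (sum f S) = 0" "b \<in> S"
  shows "Re (f b) = 0"
  using assms sum_nonneg_eq_0_iff[of S "\<lambda>b. Re (f b)"] by (simp add: Re_sum)

lemma psd_ptrace: "psd \<rho> \<Longrightarrow> psd (ptrace_B \<rho>)"
  unfolding ptrace_sum by (rule psd_sum) (auto dest: psd_conj[where Y="adj (Eb _)"])

lemma psd_kron_one_right: "psd A \<Longrightarrow> psd (kron A (mat 1))"
  unfolding kron_one_right_sum by (rule psd_sum) (auto intro: psd_conj)

lemma mv_sum: "A *v (sum f S) = (\<Sum>b\<in>S. A *v f b)"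
  apply (simp add: vec_eq_iff matrix_vector_mult_def sum_component sum_distrib_left)
  apply (rule allI, rule sum.swap)
  done

lemma kernel_lemma:
  fixes \<rho> :: "complex^('a::finite \<times> 'b::finite)^('a \<times> 'b)"
  assumes psd: "psd \<rho>" and K: "kron (ptrace_B \<rho>) (mat 1) *v x = 0"
  shows "\<rho> *v x = 0"
proof -
  have psdA: "psd (ptrace_B \<rho>)" using psd_ptrace[OF psd] .
  have z1: "ptrace_B \<rho> *v (Eb b *v x) = 0" for b
  proof -
    have "Re (\<Sum>b\<in>UNIV. cinner (Eb b *v x) (ptrace_B \<rho> *v (Eb b *v x))) = 0"
      using K unfolding kron_one_right_sum quad_sum_conj[symmetric] by simp
    then have "Re (cinner (Eb b *v x) (ptrace_B \<rho> *v (Eb b *v x))) = 0"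
      using Re_sum_zero[where S=UNIV and b=b and f="\<lambda>b. cinner (Eb b *v x) (ptrace_B \<rho> *v (Eb b *v x))"]
        psdA psd_cinner by auto
    then show ?thesis by (rule psd_zero[OF psdA])
  qed
  have z2: "\<rho> *v (adj (Eb b) *v (Eb b *v x)) = 0" for b
  proof -
    define y where "y = Eb b *v x"
    have "Re (cinner y (ptrace_B \<rho> *v y)) = 0" using z1 y_def by simp
    then have "Re (\<Sum>b'\<in>UNIV. cinner (adj (Eb b') *v y) (\<rho> *v (adj (Eb b') *v y))) = 0"
      unfolding ptrace_sum using quad_sum_conj[of y "\<lambda>b. adj (Eb b)" \<rho> UNIV] by simp
    then have "Re (cinner (adj (Eb b) *v y) (\<rho> *v (adj (Eb b) *v y))) = 0"
      using Re_sum_zero[where S=UNIV and b=b and f="\<lambda>b'. cinner (adj (Eb b') *v y) (\<rho> *v (adj (Eb b') *v y))"]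
        psd psd_cinner by auto
    then show ?thesis unfolding y_def by (rule psd_zero[OF psd])
  qed
  have sx: "(\<Sum>b\<in>UNIV. adj (Eb b) *v (Eb b *v x)) = x"
    by (simp add: mat_sum_mv[symmetric] matrix_vector_mul_assoc sum_adjEb_Eb)
  have "\<rho> *v x = \<rho> *v (\<Sum>b\<in>UNIV. adj (Eb b) *v (Eb b *v x))" by (simp only: sx)
  also have "\<dots> = (\<Sum>b\<in>UNIV. \<rho> *v (adj (Eb b) *v (Eb b *v x)))" by (rule mv_sum)
  also have "\<dots> = 0" using z2 by simp
  finally show ?thesis .
qed

lemma adjEa_mult: "(adj (Ea a) ** X) $ p $ c = (if fst p = a then X $ snd p $ c else 0)"
proof -
  have "(adj (Ea a) ** X) $ p $ c = (\<Sum>k\<in>UNIV. cnj (if fst p = a \<and> snd p = k then 1 else 0) * X $ k $ c)"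
    by (simp only: matrix_matrix_mult_def adj_def Ea_def vec_lambda_beta)
  also have "\<dots> = (if fst p = a then X $ snd p $ c else 0)"
    by (rule sum_if_eq[where c="snd p"]) auto
  finally show ?thesis .
qed

lemma mult_Ea: "(Y ** Ea a) $ r $ q = (if fst q = a then Y $ r $ snd q else 0)"
proof -
  have "(Y ** Ea a) $ r $ q = (\<Sum>k\<in>UNIV. Y $ r $ k * (if fst q = a \<and> snd q = k then 1 else 0))"
    by (simp only: matrix_matrix_mult_def Ea_def vec_lambda_beta)
  also have "\<dots> = (if fst q = a then Y $ r $ snd q else 0)"
    by (rule sum_if_eq[where c="snd q"]) auto
  finally show ?thesis .
qed

lemma kron_one_left_sum: "kron (mat 1) B = (\<Sum>a\<in>UNIV. adj (Ea a) ** B ** Ea a)"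
proof -
  have that: "(\<Sum>a\<in>UNIV. (adj (Ea a) ** B ** Ea a) $ p $ q) = kron (mat 1) B $ p $ q" for p q
    by (rule sum_if_eq[where c="fst q"]) (auto simp: mult_Ea adjEa_mult kron_def mat_def)
  then show ?thesis
    unfolding vec_eq_iff mat_sum_nth by (intro allI) (rule sym, rule that)
qed

lemma psd_kron_one_left: "psd B \<Longrightarrow> psd (kron (mat 1) B)"
  unfolding kron_one_left_sum by (rule psd_sum) (auto intro: psd_conj)

lemma rank_0_imp: fixes A :: "complex^'n^'m" assumes "rank A = 0" shows "A = 0"
proof -
  have "rows A \<subseteq> {0}" using assms unfolding row_rank_def_gen by simp
  then have "row i A = 0" for i unfolding rows_def by auto
  then show ?thesis by (simp add: vec_eq_iff row_def)
qed

lemma mv_zero_imp: "(\<And>x. A *v x = 0) \<Longrightarrow> A = (0::complex^'n^'m)"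
proof -
  assume h: "\<And>x. A *v x = 0"
  have "(A *v axis j 1) $ i = A $ i $ j" for i j
  proof -
    have "(A *v axis j 1) $ i = (\<Sum>k\<in>UNIV. A $ i $ k * (if k = j then 1 else 0))"
      by (simp only: matrix_vector_mult_def axis_def vec_lambda_beta)
    also have "\<dots> = A $ i $ j" by (rule sum_if_eq[where c=j]) auto
    finally show ?thesis .
  qed
  then show ?thesis using h by (simp add: vec_eq_iff)
qed

lemma Inf_range_ereal: "Inf {ereal l | l. True} = -\<infinity>"
  by (rule ereal_bot) (auto intro: Inf_lower)

lemma Inf_shift: "Inf ((\<lambda>x. x + ereal c) ` A) = Inf A + ereal c"
proof (rule antisym)
  show "Inf A + ereal c \<le> Inf ((\<lambda>x. x + ereal c) ` A)"
    by (rule Inf_greatest) (auto intro: add_right_mono Inf_lower)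
  have "Inf ((\<lambda>x. x + ereal c) ` A) - ereal c \<le> Inf A"
  proof (rule Inf_greatest)
    fix y assume "y \<in> A"
    then have "Inf ((\<lambda>x. x + ereal c) ` A) \<le> y + ereal c" by (auto intro: Inf_lower)
    then show "Inf ((\<lambda>x. x + ereal c) ` A) - ereal c \<le> y"
      by (simp add: ereal_minus_le_iff)
  qed
  then show "Inf ((\<lambda>x. x + ereal c) ` A) \<le> Inf A + ereal c"
    by (simp add: ereal_minus_le_iff)
qed

lemma mv_axis: "(A *v axis j 1) $ i = A $ i $ (j::'n::finite)"
proof -
  have "(A *v axis j 1) $ i = (\<Sum>k\<in>UNIV. A $ i $ k * (if k = j then 1 else 0))"
    by (simp only: matrix_vector_mult_def axis_def vec_lambda_beta)
  also have "\<dots> = A $ i $ j" by (rule sum_if_eq[where c=j]) auto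
  finally show ?thesis .
qed

lemma mm_col: "(X ** Y) $ a $ i = (X *v (Y *v axis i 1)) $ a"
  by (simp add: matrix_vector_mul_assoc mv_axis)

lemma diag_axis: "diag_mat d *v axis i 1 = axis i (complex_of_real (d i))"
proof -
  have "(diag_mat d *v axis i 1) $ k = axis i (complex_of_real (d i)) $ k" for k
    by (simp only: mv_axis) (simp add: diag_mat_def axis_def)
  then show ?thesis by (simp add: vec_eq_iff)
qed

lemma psd_scale_iff: assumes k: "0 < k" shows "psd (k *\<^sub>R X) \<longleftrightarrow> psd X"
proof
  assume p: "psd (k *\<^sub>R X)"
  have "psd ((1/k) *\<^sub>R (k *\<^sub>R X))" by (rule psd_scaleR[OF p]) (use k in simp)
  moreover have "(1/k) *\<^sub>R (k *\<^sub>R X) = X" using k by simp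
  ultimately show "psd X" by metis
qed (use k in \<open>auto intro: psd_scaleR\<close>)

lemma psd_one: "psd (mat 1 :: complex^'n^'n)"
  unfolding psd_cinner hermitian_def by (simp add: cinner_self_ge0)

lemma psd_diag: assumes "\<And>i. 0 \<le> d i" shows "psd (diag_mat d)"
proof -
  have "diag_mat d = adj (diag_mat (\<lambda>i. sqrt (d i))) ** mat 1 ** diag_mat (\<lambda>i. sqrt (d i))"
    using assms by (simp add: adj_diag diag_mat_mult)
  then show ?thesis using psd_conj[OF psd_one] by metis
qed

lemma normal_exists: "\<exists>\<sigma>::complex^'b::finite^'b. normalized_state \<sigma>"
proof -
  define \<sigma> :: "complex^'b^'b" where "\<sigma> = diag_mat (\<lambda>i. if i = undefined then 1 else 0)"
  have "psd \<sigma>" unfolding \<sigma>_def by (rule psd_diag) auto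
  moreover have "trace \<sigma> = 1"
    unfolding trace_def \<sigma>_def diag_mat_def by (simp, rule sum_if_eq[where c=undefined], auto)
  ultimately show ?thesis unfolding normalized_state_def by blast
qed

lemma Dmax_zero: "psd X \<Longrightarrow> Dmax 0 X = -\<infinity>"
proof -
  assume X: "psd X"
  have "{ereal l | l. loewner_le 0 ((2 powr l) *\<^sub>R X)} = {ereal l | l. True}"
    unfolding loewner_le_def using psd_scaleR[OF X] by auto
  then show ?thesis unfolding Dmax_def using Inf_range_ereal by simp
qed

lemma mm_ctx: "A ** B = C \<Longrightarrow> X ** A ** B = X ** (C::'a::semiring_1^'n^'n)"
  by (metis matrix_mul_assoc)

lemma equiv_abstract:
  fixes M S P Q K T \<rho> :: "complex^'n^'n"
  assumes hM: "adj M = M" and hS: "adj S = S" and hQ: "adj Q = Q"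
    and MKM: "M ** K ** M = P" and SM: "S ** M = P" and MS: "M ** S = P" and SS: "S ** S = K"
    and PQ: "P + Q = mat 1" and QQ: "Q ** Q = Q"
    and PrP: "P ** \<rho> ** P = \<rho>"
    and TM: "T ** M = M ** T" and TS: "T ** S = S ** T" and TQ: "T ** Q = Q ** T"
    and psdT: "psd T" and c: "0 \<le> c"
  shows "psd (c *\<^sub>R (K ** T) - \<rho>) \<longleftrightarrow> psd (c *\<^sub>R T - M ** \<rho> ** M)"
proof
  assume X: "psd (c *\<^sub>R (K ** T) - \<rho>)"
  have 1: "psd (M ** (c *\<^sub>R (K ** T) - \<rho>) ** M)" using psd_conj[OF X, of M] hM by simp
  have "M ** (c *\<^sub>R (K ** T) - \<rho>) ** M = c *\<^sub>R (M ** K ** T ** M) - M ** \<rho> ** M"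
    by (simp add: matrix_diff_left matrix_diff_right matrix_scaleR_left matrix_scaleR_right matrix_mul_assoc)
  also have "M ** K ** T ** M = P ** T"
    using mm_ctx[OF TM, of "M ** K"] MKM by (simp add: matrix_mul_assoc)
  finally have 2: "psd (c *\<^sub>R (P ** T) - M ** \<rho> ** M)" using 1 by simp
  have "adj Q ** T ** Q = Q ** T"
    using hQ mm_ctx[OF TQ, of Q] QQ by (simp add: matrix_mul_assoc)
  then have 3: "psd (c *\<^sub>R (Q ** T))" using psd_conj[OF psdT, of Q] psd_scaleR c by metis
  have "c *\<^sub>R (P ** T) - M ** \<rho> ** M + c *\<^sub>R (Q ** T) = c *\<^sub>R ((P + Q) ** T) - M ** \<rho> ** M"
    by (simp add: matrix_add_left scaleR_right_distrib algebra_simps)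
  also have "\<dots> = c *\<^sub>R T - M ** \<rho> ** M" using PQ by simp
  finally have e: "c *\<^sub>R (P ** T) - M ** \<rho> ** M + c *\<^sub>R (Q ** T) = c *\<^sub>R T - M ** \<rho> ** M" .
  show "psd (c *\<^sub>R T - M ** \<rho> ** M)" using psd_add[OF 2 3] unfolding e .
next
  assume Y: "psd (c *\<^sub>R T - M ** \<rho> ** M)"
  have 1: "psd (S ** (c *\<^sub>R T - M ** \<rho> ** M) ** S)" using psd_conj[OF Y, of S] hS by simp
  have "S ** (c *\<^sub>R T - M ** \<rho> ** M) ** S = c *\<^sub>R (S ** T ** S) - (S ** M) ** \<rho> ** (M ** S)"
    by (simp add: matrix_diff_left matrix_diff_right matrix_scaleR_left matrix_scaleR_right matrix_mul_assoc)
  also have "S ** T ** S = K ** T"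
    using mm_ctx[OF TS, of S] SS by (simp add: matrix_mul_assoc)
  also have "(S ** M) ** \<rho> ** (M ** S) = \<rho>" using SM MS PrP by simp
  finally show "psd (c *\<^sub>R (K ** T) - \<rho>)" using 1 by simp
qed

lemma matrix_mul_lzero0: "(0::complex^'n^'m) ** A = 0"
  by (simp add: vec_eq_iff matrix_matrix_mult_def)

lemma main_pos:
  fixes \<rho> :: "complex^('a::finite \<times> 'b::finite)^('a \<times> 'b)"
  assumes psd: "psd \<rho>" and r0: "rank (ptrace_B \<rho>) \<noteq> 0"
  shows "Imax \<rho> = H0_A \<rho> - Hmin (cond_B_given_A \<rho>)"
proof -
  define \<rho>A where "\<rho>A = ptrace_B \<rho>"
  define r where "r = real (rank \<rho>A)"
  have rpos: "0 < r" using r0 unfolding r_def \<rho>A_def by simp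
  define L where "L = log 2 r"
  have rL: "2 powr L = r" unfolding L_def using rpos by simp
  define K where "K = kron \<rho>A (mat 1 :: complex^'b^'b)"
  have psdK: "psd K" unfolding K_def \<rho>A_def by (intro psd_kron_one_right psd_ptrace psd)
  have herm\<rho>: "hermitian \<rho>" using psd psd_cinner by blast
  define g where "g = (\<lambda>t::real. if t > 0 then 1 / sqrt t else 0)"
  obtain U d where U: "unitary U" and Kd: "K = Fm U d" and Md: "mat_fun g K = Fm U (g \<circ> d)"
    using mat_fun_spec[of K g] psdK psd_cinner by blast
  have d0: "0 \<le> d i" for i using Fm_psd_nonneg[OF U] psdK Kd by simp
  define pf where "pf = (\<lambda>t::real. if t > 0 then 1 else (0::real))"
  define qf where "qf = (\<lambda>t::real. if t > 0 then 0 else (1::real))"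
  define M where "M = Fm U (g \<circ> d)"
  define P where "P = Fm U (pf \<circ> d)"
  define Q where "Q = Fm U (qf \<circ> d)"
  define S where "S = Fm U (sqrt \<circ> d)"
  have MKM: "M ** K ** M = P"
    unfolding M_def P_def Kd Fm_mult[OF U]
  proof (rule Fm_cong)
    fix i show "(g \<circ> d) i * d i * (g \<circ> d) i = (pf \<circ> d) i"
      using d0[of i] by (auto simp: g_def pf_def field_simps)
  qed
  have SM: "S ** M = P" unfolding S_def M_def P_def Fm_mult[OF U]
    by (rule Fm_cong) (auto simp: g_def pf_def)
  have MS: "M ** S = P" unfolding S_def M_def P_def Fm_mult[OF U]
    by (rule Fm_cong) (auto simp: g_def pf_def)
  have SS: "S ** S = K" unfolding S_def Kd Fm_mult[OF U]
    by (rule Fm_cong) (use d0 in auto)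
  have PQ: "P + Q = mat 1" unfolding P_def Q_def Fm_add Fm_one[OF U, symmetric]
    by (rule Fm_cong) (auto simp: pf_def qf_def)
  have QQ: "Q ** Q = Q" unfolding Q_def Fm_mult[OF U]
    by (rule Fm_cong) (auto simp: qf_def)
  have hM: "adj M = M" and hS: "adj S = S" and hQ: "adj Q = Q" and hP: "adj P = P"
    unfolding M_def S_def Q_def P_def by (simp_all add: Fm_adj)
  have col0: "\<rho> *v (U *v axis i 1) = 0" if "\<not> d i > 0" for i
  proof -
    have di: "d i = 0" using that d0[of i] by simp
    have "K ** U = U ** diag_mat d" unfolding Kd Fm_def by (simp add: unitary_cancel[OF U])
    then have "K *v (U *v axis i 1) = U *v (diag_mat d *v axis i 1)"
      by (simp add: matrix_vector_mul_assoc)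
    also have "\<dots> = 0"
    proof -
      have ax: "axis i (0::complex) = (0 :: complex^('a \<times> 'b))" by (simp add: axis_def vec_eq_iff)
      show ?thesis by (simp only: diag_axis di of_real_0 ax matrix_vector_mult_0_right)
    qed
    finally have "kron (ptrace_B \<rho>) (mat 1) *v (U *v axis i 1) = 0" unfolding K_def \<rho>A_def .
    then show ?thesis by (rule kernel_lemma[OF psd])
  qed
  have "\<rho> ** U ** diag_mat (qf \<circ> d) = 0"
  proof -
    have "(\<rho> ** U ** diag_mat (qf \<circ> d)) $ a $ i = 0" for a i
    proof (cases "d i > 0")
      case True then show ?thesis by (simp add: diag_mat_mult_right qf_def)
    next
      case False
      then have "(\<rho> ** U) $ a $ i = 0" using col0[OF False] by (simp add: mm_col)
      then show ?thesis by (simp add: diag_mat_mult_right)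
    qed
    then show ?thesis by (simp add: vec_eq_iff)
  qed
  then have rQ: "\<rho> ** Q = 0" unfolding Q_def Fm_def by (simp add: matrix_mul_assoc matrix_mul_lzero0)
  have rP: "\<rho> ** P = \<rho>"
  proof -
    have "\<rho> = \<rho> ** (P + Q)" using PQ by simp
    also have "\<dots> = \<rho> ** P" using rQ by (simp add: matrix_add_ldistrib)
    finally show ?thesis by simp
  qed
  have Pr: "P ** \<rho> = \<rho>"
  proof -
    have "adj (\<rho> ** P) = P ** \<rho>" using herm\<rho> hP by (simp add: adj_mult hermitian_def)
    then show ?thesis using rP herm\<rho> by (simp add: hermitian_def)
  qed
  have PrP: "P ** \<rho> ** P = \<rho>" using Pr rP by simp
  have gis: "gen_inv_sqrt K = M" unfolding gen_inv_sqrt_def using Md g_def M_def by simp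
  have cond: "cond_B_given_A \<rho> = (1/r) *\<^sub>R (M ** \<rho> ** M)"
    unfolding cond_B_given_A_def Let_def K_def[symmetric, unfolded \<rho>A_def] gis
    by (simp add: matrix_scaleR_left matrix_scaleR_right r_def \<rho>A_def)
  have key: "Dmax (cond_B_given_A \<rho>) (kron (mat 1) \<sigma>) = Dmax \<rho> (kron \<rho>A \<sigma>) + ereal (- L)"
    if psd\<sigma>: "psd \<sigma>" for \<sigma> :: "complex^'b^'b"
  proof -
    define T where "T = kron (mat 1 :: complex^'a^'a) \<sigma>"
    have psdT: "psd T" unfolding T_def by (rule psd_kron_one_left[OF psd\<sigma>])
    have KT: "K ** T = kron \<rho>A \<sigma>" unfolding K_def T_def by (simp add: kron_mult)
    have TK: "T ** K = kron \<rho>A \<sigma>" unfolding K_def T_def by (simp add: kron_mult)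
    have TFm: "T ** Fm U (h \<circ> d) = Fm U (h \<circ> d) ** T" for h
      by (rule Fm_comm[OF U]) (use KT TK Kd in simp)
    have TM: "T ** M = M ** T" unfolding M_def by (rule TFm)
    have TS: "T ** S = S ** T" unfolding S_def by (rule TFm)
    have TQ: "T ** Q = Q ** T" unfolding Q_def by (rule TFm)
    have eqv: "psd (c *\<^sub>R (K ** T) - \<rho>) \<longleftrightarrow> psd (c *\<^sub>R T - M ** \<rho> ** M)" if "0 \<le> c" for c
      by (rule equiv_abstract[OF hM hS hQ MKM SM MS SS PQ QQ PrP TM TS TQ psdT that])
    have lw: "loewner_le (cond_B_given_A \<rho>) (2 powr l *\<^sub>R T) \<longleftrightarrow>
              loewner_le \<rho> (2 powr (l + L) *\<^sub>R kron \<rho>A \<sigma>)" for l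
    proof -
      have e: "2 powr l *\<^sub>R T - (1/r) *\<^sub>R (M ** \<rho> ** M) = (1/r) *\<^sub>R (2 powr (l + L) *\<^sub>R T - M ** \<rho> ** M)"
        using rpos by (simp add: powr_add rL scaleR_diff_right)
      have "loewner_le (cond_B_given_A \<rho>) (2 powr l *\<^sub>R T) \<longleftrightarrow> psd (2 powr (l + L) *\<^sub>R T - M ** \<rho> ** M)"
        unfolding loewner_le_def cond e using psd_scale_iff[of "1/r"] rpos by simp
      also have "\<dots> \<longleftrightarrow> psd (2 powr (l + L) *\<^sub>R (K ** T) - \<rho>)" using eqv[of "2 powr (l + L)"] by simp
      finally show ?thesis unfolding loewner_le_def KT .
    qed
    have "{ereal l | l. loewner_le (cond_B_given_A \<rho>) (2 powr l *\<^sub>R T)}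
        = (\<lambda>x. x + ereal (- L)) ` {ereal m | m. loewner_le \<rho> (2 powr m *\<^sub>R kron \<rho>A \<sigma>)}"
    proof (rule set_eqI, rule iffI)
      fix x assume "x \<in> {ereal l | l. loewner_le (cond_B_given_A \<rho>) (2 powr l *\<^sub>R T)}"
      then obtain l where x: "x = ereal l" and h: "loewner_le \<rho> (2 powr (l + L) *\<^sub>R kron \<rho>A \<sigma>)"
        using lw by blast
      have "x = ereal (l + L) + ereal (- L)" using x by simp
      then show "x \<in> (\<lambda>x. x + ereal (- L)) ` {ereal m | m. loewner_le \<rho> (2 powr m *\<^sub>R kron \<rho>A \<sigma>)}"
        using h by blast
    next
      fix x assume "x \<in> (\<lambda>x. x + ereal (- L)) ` {ereal m | m. loewner_le \<rho> (2 powr m *\<^sub>R kron \<rho>A \<sigma>)}"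
      then obtain m where x: "x = ereal m + ereal (- L)" and h: "loewner_le \<rho> (2 powr m *\<^sub>R kron \<rho>A \<sigma>)"
        by blast
      have "x = ereal (m - L)" using x by simp
      moreover have "loewner_le (cond_B_given_A \<rho>) (2 powr (m - L) *\<^sub>R T)" using lw[of "m - L"] h by simp
      ultimately show "x \<in> {ereal l | l. loewner_le (cond_B_given_A \<rho>) (2 powr l *\<^sub>R T)}" by blast
    qed
    then show ?thesis unfolding Dmax_def T_def[symmetric] by (simp add: Inf_shift)
  qed
  have sets: "{Dmax (cond_B_given_A \<rho>) (kron (mat 1) \<sigma>) | \<sigma> :: complex^'b^'b. normalized_state \<sigma>}
      = (\<lambda>x. x + ereal (- L)) ` {Dmax \<rho> (kron \<rho>A \<sigma>) | \<sigma> :: complex^'b^'b. normalized_state \<sigma>}"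
    unfolding normalized_state_def using key by (auto, metis)
  have Hm: "Hmin (cond_B_given_A \<rho>) = - (Imax \<rho> + ereal (- L))"
    unfolding Hmin_def Imax_def sets Inf_shift \<rho>A_def by simp
  have H0: "H0_A \<rho> = ereal L"
    unfolding H0_A_def L_def r_def \<rho>A_def using r0 by simp
  show ?thesis unfolding Hm H0 by (cases "Imax \<rho>") auto
qed

lemma kron_zero_left: "kron 0 B = 0"
  by (simp add: vec_eq_iff kron_def)

lemma zero_mv: "(0::complex^'n^'m) *v x = 0"
  by (simp add: vec_eq_iff matrix_vector_mult_def)

lemma matrix_mul_rzero0: "A ** (0::complex^'n^'m) = 0"
  by (simp add: vec_eq_iff matrix_matrix_mult_def)

theorem mainTheorem16:
  fixes \<rho> :: "complex^('a::finite \<times> 'b::finite)^('a \<times> 'b)"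
  assumes "subnormalized_state \<rho>"
  shows "Imax \<rho> = H0_A \<rho> - Hmin (cond_B_given_A \<rho>)"
proof -
  have psd: "psd \<rho>" using assms unfolding subnormalized_state_def by blast
  show ?thesis
  proof (cases "rank (ptrace_B \<rho>) = 0")
    case False
    then show ?thesis by (rule main_pos[OF psd])
  next
    case True
    have A0: "ptrace_B \<rho> = 0" using rank_0_imp[OF True] .
    have "\<rho> *v x = 0" for x
      by (rule kernel_lemma[OF psd]) (simp add: A0 kron_zero_left zero_mv)
    then have r0: "\<rho> = 0" by (rule mv_zero_imp)
    have c0: "cond_B_given_A \<rho> = 0"
      unfolding cond_B_given_A_def Let_def r0 by (simp add: matrix_mul_rzero0 matrix_mul_lzero0)
    obtain \<sigma>0 :: "complex^'b^'b" where s0: "normalized_state \<sigma>0" using normal_exists by blast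
    have "Inf {Dmax (0 :: complex^('a \<times> 'b)^('a \<times> 'b)) (kron (mat 1) \<sigma>) | \<sigma> :: complex^'b^'b. normalized_state \<sigma>} = -\<infinity>"
    proof (rule Inf_eq_MInfty)
      have "Dmax (0 :: complex^('a \<times> 'b)^('a \<times> 'b)) (kron (mat 1) \<sigma>0) = -\<infinity>"
        using s0 unfolding normalized_state_def by (intro Dmax_zero psd_kron_one_left) blast
      then show "-\<infinity> \<in> {Dmax (0 :: complex^('a \<times> 'b)^('a \<times> 'b)) (kron (mat 1) \<sigma>) | \<sigma> :: complex^'b^'b. normalized_state \<sigma>}"
        using s0 by (metis (mono_tags, lifting) mem_Collect_eq)
    qed
    then have Hm: "Hmin (cond_B_given_A \<rho>) = \<infinity>" unfolding Hmin_def c0 by simp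
    have H0: "H0_A \<rho> = -\<infinity>" unfolding H0_A_def using True by simp
    have "Imax \<rho> = -\<infinity>"
      unfolding Imax_def
    proof (rule Inf_eq_MInfty)
      have kz: "kron (ptrace_B \<rho>) \<sigma>0 = 0" by (simp add: A0 kron_zero_left)
      have "Dmax \<rho> (kron (ptrace_B \<rho>) \<sigma>0) = -\<infinity>"
        unfolding kz unfolding r0 by (rule Dmax_zero) simp
      then show "-\<infinity> \<in> {Dmax \<rho> (kron (ptrace_B \<rho>) \<sigma>) | \<sigma> :: complex^'b^'b. normalized_state \<sigma>}"
        using s0 by (metis (mono_tags, lifting) mem_Collect_eq)
    qed
    then show ?thesis unfolding Hm H0 by simp
  qed
qed

end
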